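(* Let $P$ be a poset and $e:P\to L$ a join-completion of $P$. Then $(\mathcal{U}_e)^-$ is maximal.
   Context: A join-completion of $P$ is an order embedding $e:P\to L$ into a complete lattice with every $x\in L$ equal to $\bigvee\{e(p):e(p)\le x\}$. $\Gamma_e$ is the standard closure operator on $P$ whose closed sets are the sets $e^{-1}(x^\downarrow)$, $x\in L$, and $\mathcal{U}_e=\{S\subseteq P:\bigvee S\text{ exists in }P\text{ and }\bigvee S\in\Gamma_e(S)\}$. A join-specification for $P$ is a set $\mathcal{U}\subseteq\wp(P)$ such that $\bigvee S$ exists for every $S\in\mathcal{U}$ and $\{p\}\in\mathcal{U}$ for all $p$. A $\mathcal{U}$-ideal is a down-closed $C$ with $\bigvee S\in C$ whenever $S\in\mathcal{U}$, $S\subseteq C$; $\mathcal{I}_{\mathcal{U}}$ is the lattice of $\mathcal{U}$-ideals; $\Gamma_{\mathcal{U}}(S)$ the smallest $\mathcal{U}$-ideal containing $S$; $\mathcal{U}^+=\{S:\bigvee S\text{ exists and }\bigvee S\in\Gamma_{\mathcal{U}}(S)\}$; $\mathcal{U}$ is maximal if $\mathcal{U}=\mathcal{U}^+$ and frame-generating if $\mathcal{I}_{\mathcal{U}}$ is a frame. For a join-specification $\mathcal{V}$, $\mathcal{V}^-$ denotes the largest frame-generating join-specification contained in $\mathcal{V}$ (which exists). *)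

theory Defs
  imports Main
begin

definition is_join :: "'a::order set \<Rightarrow> 'a \<Rightarrow> bool" where
  "is_join S x \<longleftrightarrow> (\<forall>s\<in>S. s \<le> x) \<and> (\<forall>y. (\<forall>s\<in>S. s \<le> y) \<longrightarrow> x \<le> y)"

definition has_join :: "'a::order set \<Rightarrow> bool" where
  "has_join S \<longleftrightarrow> (\<exists>x. is_join S x)"

definition join :: "'a::order set \<Rightarrow> 'a" where
  "join S = (THE x. is_join S x)"

definition order_embedding :: "('a::order \<Rightarrow> 'b::order) \<Rightarrow> bool" where
  "order_embedding e \<longleftrightarrow> (\<forall>p q. p \<le> q \<longleftrightarrow> e p \<le> e q)"

definition join_completion :: "('a::order \<Rightarrow> 'b::complete_lattice) \<Rightarrow> bool" where
  "join_completion e \<longleftrightarrow> order_embedding e \<and> (\<forall>x. x = Sup {e p | p. e p \<le> x})"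

definition Gamma_e :: "('a::order \<Rightarrow> 'b::complete_lattice) \<Rightarrow> 'a set \<Rightarrow> 'a set" where
  "Gamma_e e S = \<Inter>{C. (\<exists>x. C = e -` {..x}) \<and> S \<subseteq> C}"

definition U_e :: "('a::order \<Rightarrow> 'b::complete_lattice) \<Rightarrow> 'a set set" where
  "U_e e = {S. has_join S \<and> join S \<in> Gamma_e e S}"

definition join_spec :: "'a::order set set \<Rightarrow> bool" where
  "join_spec U \<longleftrightarrow> (\<forall>S\<in>U. has_join S) \<and> (\<forall>p. {p} \<in> U)"

definition U_ideal :: "'a::order set set \<Rightarrow> 'a set \<Rightarrow> bool" where
  "U_ideal U C \<longleftrightarrow> (\<forall>x y. y \<in> C \<longrightarrow> x \<le> y \<longrightarrow> x \<in> C) \<and> (\<forall>S\<in>U. S \<subseteq> C \<longrightarrow> join S \<in> C)"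

definition I_U :: "'a::order set set \<Rightarrow> 'a set set" where
  "I_U U = {C. U_ideal U C}"

definition Gamma_U :: "'a::order set set \<Rightarrow> 'a set \<Rightarrow> 'a set" where
  "Gamma_U U S = \<Inter>{C. U_ideal U C \<and> S \<subseteq> C}"

definition U_plus :: "'a::order set set \<Rightarrow> 'a set set" where
  "U_plus U = {S. has_join S \<and> join S \<in> Gamma_U U S}"

definition maximal_spec :: "'a::order set set \<Rightarrow> bool" where
  "maximal_spec U \<longleftrightarrow> U = U_plus U"

definition lub_in :: "'c set set \<Rightarrow> 'c set set \<Rightarrow> 'c set \<Rightarrow> bool" where
  "lub_in X B a \<longleftrightarrow> a \<in> X \<and> (\<forall>b\<in>B. b \<subseteq> a) \<and> (\<forall>c\<in>X. (\<forall>b\<in>B. b \<subseteq> c) \<longrightarrow> a \<subseteq> c)"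

definition glb_in :: "'c set set \<Rightarrow> 'c set set \<Rightarrow> 'c set \<Rightarrow> bool" where
  "glb_in X B a \<longleftrightarrow> a \<in> X \<and> (\<forall>b\<in>B. a \<subseteq> b) \<and> (\<forall>c\<in>X. (\<forall>b\<in>B. c \<subseteq> b) \<longrightarrow> c \<subseteq> a)"

definition lubX :: "'c set set \<Rightarrow> 'c set set \<Rightarrow> 'c set" where
  "lubX X B = (THE a. lub_in X B a)"

definition glbX :: "'c set set \<Rightarrow> 'c set set \<Rightarrow> 'c set" where
  "glbX X B = (THE a. glb_in X B a)"

definition is_frame :: "'c set set \<Rightarrow> bool" where
  "is_frame X \<longleftrightarrow> (\<forall>B\<subseteq>X. \<exists>a. lub_in X B a) \<and> (\<forall>B\<subseteq>X. \<exists>a. glb_in X B a) \<and>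
     (\<forall>a\<in>X. \<forall>B\<subseteq>X. glbX X {a, lubX X B} = lubX X ((\<lambda>b. glbX X {a, b}) ` B))"

definition frame_generating :: "'a::order set set \<Rightarrow> bool" where
  "frame_generating U \<longleftrightarrow> is_frame (I_U U)"

definition minus_spec :: "'a::order set set \<Rightarrow> 'a set set" where
  "minus_spec V = (THE W. join_spec W \<and> frame_generating W \<and> W \<subseteq> V \<and>
      (\<forall>W'. join_spec W' \<and> frame_generating W' \<and> W' \<subseteq> V \<longrightarrow> W' \<subseteq> W))"

end

theory Submission
  imports Defs
begin

lemma is_join_unique: "is_join S x \<Longrightarrow> is_join S y \<Longrightarrow> x = (y::'a::order)"
  unfolding is_join_def by (meson order_antisym)

lemma join_is: "has_join S \<Longrightarrow> is_join S (join S)"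
  unfolding has_join_def join_def by (metis is_join_unique theI)

lemma join_single: "has_join {p::'a::order}" "join {p::'a} = p"
proof -
  have "is_join {p} p" unfolding is_join_def by auto
  then show "has_join {p}" unfolding has_join_def by auto
  then show "join {p} = p" using \<open>is_join {p} p\<close> join_is is_join_unique by metis
qed

lemma ideal_Inter: "(\<And>C. C \<in> F \<Longrightarrow> U_ideal U C) \<Longrightarrow> U_ideal U (\<Inter>F)"
  unfolding U_ideal_def
proof (intro conjI allI impI ballI)
  fix x y assume h: "\<And>C. C \<in> F \<Longrightarrow> (\<forall>x y. y \<in> C \<longrightarrow> x \<le> y \<longrightarrow> x \<in> C) \<and> (\<forall>S\<in>U. S \<subseteq> C \<longrightarrow> join S \<in> C)"
    and "y \<in> \<Inter>F" "x \<le> y"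
  then show "x \<in> \<Inter>F" by blast
next
  fix S assume h: "\<And>C. C \<in> F \<Longrightarrow> (\<forall>x y. y \<in> C \<longrightarrow> x \<le> y \<longrightarrow> x \<in> C) \<and> (\<forall>S\<in>U. S \<subseteq> C \<longrightarrow> join S \<in> C)"
    and "S \<in> U" "S \<subseteq> \<Inter>F"
  then show "join S \<in> \<Inter>F" by blast
qed
lemma Gamma_ideal: "U_ideal U (Gamma_U U S)"
  unfolding Gamma_U_def by (rule ideal_Inter) auto

lemma Gamma_sub: "S \<subseteq> Gamma_U U S"
  unfolding Gamma_U_def by auto

lemma Gamma_least: "U_ideal U C \<Longrightarrow> S \<subseteq> C \<Longrightarrow> Gamma_U U S \<subseteq> C"
  unfolding Gamma_U_def by auto

lemma ideal_anti: "U \<subseteq> U' \<Longrightarrow> U_ideal U' C \<Longrightarrow> U_ideal U C"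
  unfolding U_ideal_def by (meson subsetD)

lemma Gamma_monoU: "U \<subseteq> U' \<Longrightarrow> Gamma_U U S \<subseteq> Gamma_U U' S"
  by (meson Gamma_ideal Gamma_least Gamma_sub ideal_anti)

lemma ideal_down: "U_ideal U C \<Longrightarrow> y \<in> C \<Longrightarrow> x \<le> y \<Longrightarrow> x \<in> C"
  unfolding U_ideal_def by blast

lemma ideal_join: "U_ideal U C \<Longrightarrow> S \<in> U \<Longrightarrow> S \<subseteq> C \<Longrightarrow> join S \<in> C"
  unfolding U_ideal_def by blast

lemma frame_distr: "is_frame X \<Longrightarrow> a \<in> X \<Longrightarrow> B \<subseteq> X \<Longrightarrow>
   glbX X {a, lubX X B} = lubX X ((\<lambda>b. glbX X {a, b}) ` B)"
  unfolding is_frame_def by blast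

lemma Gamma_join: "S \<in> U \<Longrightarrow> join S \<in> Gamma_U U S"
  using ideal_join[OF Gamma_ideal _ Gamma_sub] .

lemma lub_I: "lubX (I_U U) B = Gamma_U U (\<Union>B)"
proof -
  have l: "lub_in (I_U U) B (Gamma_U U (\<Union>B))"
    unfolding lub_in_def I_U_def
  proof (intro conjI ballI impI)
    show "Gamma_U U (\<Union>B) \<in> {C. U_ideal U C}" using Gamma_ideal by simp
  next
    fix b assume "b \<in> B" then show "b \<subseteq> Gamma_U U (\<Union>B)" using Gamma_sub[of "\<Union>B" U] by blast
  next
    fix c assume "c \<in> {C. U_ideal U C}" "\<forall>b\<in>B. b \<subseteq> c"
    then show "Gamma_U U (\<Union>B) \<subseteq> c" using Gamma_least[of U c "\<Union>B"] by blast
  qed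
  have "lub_in (I_U U) B a \<Longrightarrow> a = Gamma_U U (\<Union>B)" for a
    using l unfolding lub_in_def by (meson subset_antisym)
  then show ?thesis unfolding lubX_def using l by (metis the_equality)
qed

lemma glb_I: "B \<subseteq> I_U U \<Longrightarrow> glbX (I_U U) B = \<Inter>B"
proof -
  assume B: "B \<subseteq> I_U U"
  have i: "\<Inter>B \<in> I_U U" using B ideal_Inter[of B U] unfolding I_U_def by auto
  have l: "glb_in (I_U U) B (\<Inter>B)"
    unfolding glb_in_def using i by (simp add: Inf_lower le_Inf_iff)
  have "glb_in (I_U U) B a \<Longrightarrow> a = \<Inter>B" for a
    using l unfolding glb_in_def by (meson subset_antisym)
  then show ?thesis unfolding glbX_def using l by (metis the_equality)
qed
lemma join_le: "join_spec U \<Longrightarrow> T \<in> U \<Longrightarrow> (\<And>t. t \<in> T \<Longrightarrow> t \<le> x) \<Longrightarrow> join T \<le> x"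
proof -
  assume "join_spec U" "T \<in> U" and h: "\<And>t. t \<in> T \<Longrightarrow> t \<le> x"
  then have "has_join T" unfolding join_spec_def by blast
  then have "is_join T (join T)" by (rule join_is)
  then show "join T \<le> x" using h unfolding is_join_def by blast
qed

lemma lub_in_I: "lub_in (I_U U) B (Gamma_U U (\<Union>B))"
    unfolding lub_in_def I_U_def
  proof (intro conjI ballI impI)
    show "Gamma_U U (\<Union>B) \<in> {C. U_ideal U C}" using Gamma_ideal by simp
  next
    fix b assume "b \<in> B" then show "b \<subseteq> Gamma_U U (\<Union>B)" using Gamma_sub[of "\<Union>B" U] by blast
  next
    fix c assume "c \<in> {C. U_ideal U C}" "\<forall>b\<in>B. b \<subseteq> c"
    then show "Gamma_U U (\<Union>B) \<subseteq> c" using Gamma_least[of U c "\<Union>B"] by blast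
  qed

lemma glb_in_I: "B \<subseteq> I_U U \<Longrightarrow> glb_in (I_U U) B (\<Inter>B)"
proof -
  assume B: "B \<subseteq> I_U U"
  have i: "\<Inter>B \<in> I_U U" using B ideal_Inter[of B U] unfolding I_U_def by auto
  show "glb_in (I_U U) B (\<Inter>B)"
    unfolding glb_in_def using i by (simp add: Inf_lower le_Inf_iff)
qed

definition Dcond :: "'a::order set set \<Rightarrow> bool" where
  "Dcond U \<longleftrightarrow> (\<forall>S\<in>U. \<forall>p. p \<le> join S \<longrightarrow> p \<in> Gamma_U U {q. q \<le> p \<and> (\<exists>s\<in>S. q \<le> s)})"

lemma frame_char:
  assumes js: "join_spec U"
  shows "frame_generating U \<longleftrightarrow> Dcond U"
proof
  assume fg: "frame_generating U"
  then have distr: "\<And>a B. a \<in> I_U U \<Longrightarrow> B \<subseteq> I_U U \<Longrightarrow>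
     a \<inter> Gamma_U U (\<Union>B) = Gamma_U U (\<Union>((\<lambda>b. a \<inter> b) ` B))"
  proof -
    fix a B assume a: "a \<in> I_U U" and B: "B \<subseteq> I_U U"
    have lb: "Gamma_U U (\<Union>B) \<in> I_U U" using Gamma_ideal unfolding I_U_def by blast
    have ab: "(\<lambda>b. a \<inter> b) ` B \<subseteq> I_U U"
    proof
      fix x assume "x \<in> (\<lambda>b. a \<inter> b) ` B"
      then obtain b where "b \<in> B" "x = \<Inter>{a, b}" by auto
      then show "x \<in> I_U U" using a B ideal_Inter[of "{a,b}" U] unfolding I_U_def by auto
    qed
    have "glbX (I_U U) {a, lubX (I_U U) B} = lubX (I_U U) ((\<lambda>b. glbX (I_U U) {a, b}) ` B)"
      using frame_distr[OF fg[unfolded frame_generating_def] a B] .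
    moreover have "glbX (I_U U) {a, lubX (I_U U) B} = a \<inter> Gamma_U U (\<Union>B)"
      unfolding lub_I using glb_I[of "{a, Gamma_U U (\<Union>B)}" U] a lb by simp
    moreover have "(\<lambda>b. glbX (I_U U) {a, b}) ` B = (\<lambda>b. a \<inter> b) ` B"
    proof (rule image_cong[OF refl])
      fix b assume "b \<in> B" then show "glbX (I_U U) {a, b} = a \<inter> b"
        using glb_I[of "{a,b}" U] a B by auto
    qed
    ultimately show "a \<inter> Gamma_U U (\<Union>B) = Gamma_U U (\<Union>((\<lambda>b. a \<inter> b) ` B))"
      by (simp only: lub_I)
  qed
  show "Dcond U" unfolding Dcond_def
  proof (intro ballI allI impI)
    fix S p assume S: "S \<in> U" and p: "p \<le> join S"
    have down: "U_ideal U {q. q \<le> x}" for x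
      unfolding U_ideal_def
    proof (intro conjI allI impI ballI)
      fix a b assume "b \<in> {q. q \<le> x}" "a \<le> b" then show "a \<in> {q. q \<le> x}" by auto
    next
      fix T assume "T \<in> U" "T \<subseteq> {q. q \<le> x}"
      then show "join T \<in> {q. q \<le> x}" using join_le[OF js] by blast
    qed
    let ?B = "(\<lambda>s. {q. q \<le> s}) ` S"
    have B: "?B \<subseteq> I_U U" using down unfolding I_U_def by auto
    have a: "{q. q \<le> p} \<in> I_U U" using down unfolding I_U_def by auto
    have "S \<subseteq> \<Union>?B" by auto
    then have "S \<subseteq> Gamma_U U (\<Union>?B)" using Gamma_sub by blast
    then have "join S \<in> Gamma_U U (\<Union>?B)" using ideal_join[OF Gamma_ideal S] by blast
    then have "p \<in> Gamma_U U (\<Union>?B)" using ideal_down[OF Gamma_ideal _ p] by blast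
    then have "p \<in> {q. q \<le> p} \<inter> Gamma_U U (\<Union>?B)" by auto
    also have "\<dots> = Gamma_U U (\<Union>((\<lambda>b. {q. q \<le> p} \<inter> b) ` ?B))" using distr[OF a B] by simp
    also have "\<Union>((\<lambda>b. {q. q \<le> p} \<inter> b) ` ?B) = {q. q \<le> p \<and> (\<exists>s\<in>S. q \<le> s)}" by auto
    finally show "p \<in> Gamma_U U {q. q \<le> p \<and> (\<exists>s\<in>S. q \<le> s)}" .
  qed
next
  assume D: "Dcond U"
  have distr: "a \<inter> Gamma_U U (\<Union>B) = Gamma_U U (\<Union>((\<lambda>b. a \<inter> b) ` B))"
    if a: "a \<in> I_U U" and B: "B \<subseteq> I_U U" for a B
  proof
    let ?C = "Gamma_U U (\<Union>((\<lambda>b. a \<inter> b) ` B))"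
    have Cid: "U_ideal U ?C" by (rule Gamma_ideal)
    have aid: "U_ideal U a" using a unfolding I_U_def by auto
    let ?K = "{x. \<forall>y. y \<le> x \<longrightarrow> y \<in> a \<longrightarrow> y \<in> ?C}"
    have Kid: "U_ideal U ?K" unfolding U_ideal_def
    proof (intro conjI allI impI ballI)
      fix x y assume "y \<in> ?K" "x \<le> y" then show "x \<in> ?K" using order_trans by blast
    next
      fix S assume S: "S \<in> U" and SK: "S \<subseteq> ?K"
      show "join S \<in> ?K"
      proof (intro CollectI allI impI)
        fix q assume q: "q \<le> join S" "q \<in> a"
        have g: "q \<in> Gamma_U U {r. r \<le> q \<and> (\<exists>s\<in>S. r \<le> s)}" using D S q unfolding Dcond_def by blast
        have "{r. r \<le> q \<and> (\<exists>s\<in>S. r \<le> s)} \<subseteq> ?C"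
        proof
          fix r assume "r \<in> {r. r \<le> q \<and> (\<exists>s\<in>S. r \<le> s)}"
          then obtain s where r: "r \<le> q" "s \<in> S" "r \<le> s" by auto
          have "r \<in> a" using ideal_down[OF aid q(2) r(1)] .
          then show "r \<in> ?C" using SK r by blast
        qed
        then show "q \<in> ?C" using g Gamma_least[OF Cid] by blast
      qed
    qed
    have "\<Union>B \<subseteq> ?K"
    proof
      fix x assume "x \<in> \<Union>B"
      then obtain b where b: "b \<in> B" "x \<in> b" by auto
      have bid: "U_ideal U b" using b B unfolding I_U_def by auto
      show "x \<in> ?K"
      proof (intro CollectI allI impI)
        fix y assume "y \<le> x" "y \<in> a"
        then have "y \<in> a \<inter> b" using ideal_down[OF bid b(2)] by blast
        then have "y \<in> \<Union>((\<lambda>b. a \<inter> b) ` B)" using b(1) by blast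
        then show "y \<in> ?C" using Gamma_sub[of "\<Union>((\<lambda>b. a \<inter> b) ` B)" U] by blast
      qed
    qed
    then have "Gamma_U U (\<Union>B) \<subseteq> ?K" using Gamma_least[OF Kid] by blast
    then show "a \<inter> Gamma_U U (\<Union>B) \<subseteq> ?C"
    proof (intro subsetI)
      fix x assume "Gamma_U U (\<Union>B) \<subseteq> ?K" "x \<in> a \<inter> Gamma_U U (\<Union>B)"
      then have "x \<in> ?K" "x \<in> a" by auto
      then show "x \<in> ?C" using order_refl[of x] by blast
    qed
  next
    have "\<Union>((\<lambda>b. a \<inter> b) ` B) \<subseteq> a \<inter> Gamma_U U (\<Union>B)" using Gamma_sub by blast
    moreover have "U_ideal U (a \<inter> Gamma_U U (\<Union>B))"
      using ideal_Inter[of "{a, Gamma_U U (\<Union>B)}" U] a Gamma_ideal unfolding I_U_def by auto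
    ultimately show "Gamma_U U (\<Union>((\<lambda>b. a \<inter> b) ` B)) \<subseteq> a \<inter> Gamma_U U (\<Union>B)"
      using Gamma_least by blast
  qed
  show "frame_generating U" unfolding frame_generating_def is_frame_def
  proof (intro conjI ballI allI impI)
    fix B assume "B \<subseteq> I_U U"
    show "\<exists>a. lub_in (I_U U) B a"
      using lub_in_I by blast
  next
    fix B assume B: "B \<subseteq> I_U U"
    show "\<exists>a. glb_in (I_U U) B a"
      using glb_in_I[OF B] by blast
  next
    fix a B assume a: "a \<in> I_U U" and B: "B \<subseteq> I_U U"
    have lb: "Gamma_U U (\<Union>B) \<in> I_U U" using Gamma_ideal unfolding I_U_def by blast
    have "glbX (I_U U) {a, lubX (I_U U) B} = a \<inter> Gamma_U U (\<Union>B)"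
      unfolding lub_I using glb_I[of "{a, Gamma_U U (\<Union>B)}" U] a lb by simp
    moreover have "(\<lambda>b. glbX (I_U U) {a, b}) ` B = (\<lambda>b. a \<inter> b) ` B"
    proof (rule image_cong[OF refl])
      fix b assume "b \<in> B" then show "glbX (I_U U) {a, b} = a \<inter> b"
        using glb_I[of "{a,b}" U] a B by auto
    qed
    ultimately show "glbX (I_U U) {a, lubX (I_U U) B} = lubX (I_U U) ((\<lambda>b. glbX (I_U U) {a, b}) ` B)"
      using distr[OF a B] by (simp only: lub_I)
  qed
qed

lemma Dcond_Union:
  assumes "\<And>W. W \<in> F \<Longrightarrow> Dcond W"
  shows "Dcond (\<Union>F)"
  unfolding Dcond_def
proof (intro ballI allI impI)
  fix S p assume "S \<in> \<Union>F" and pj: "p \<le> join S"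
  then obtain W where W: "W \<in> F" "S \<in> W" by auto
  have DW: "Dcond W" using assms W(1) .
  have "p \<in> Gamma_U W {q. q \<le> p \<and> (\<exists>s\<in>S. q \<le> s)}"
    using DW W(2) pj unfolding Dcond_def by blast
  moreover have "W \<subseteq> \<Union>F" using W by auto
  ultimately show "p \<in> Gamma_U (\<Union>F) {q. q \<le> p \<and> (\<exists>s\<in>S. q \<le> s)}"
    using Gamma_monoU[of W "\<Union>F" "{q. q \<le> p \<and> (\<exists>s\<in>S. q \<le> s)}"] by blast
qed

lemma singles_in_Ue: "{p} \<in> U_e e"
proof -
  have "p \<in> Gamma_e e {p}" unfolding Gamma_e_def by blast
  then show ?thesis unfolding U_e_def using join_single(1)[of p] join_single(2)[of p] by simp
qed

lemma minus_exists:
  fixes e :: "'a::order \<Rightarrow> 'b::complete_lattice"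
  shows "\<exists>W. join_spec W \<and> frame_generating W \<and> W \<subseteq> U_e e \<and>
      (\<forall>W'. join_spec W' \<and> frame_generating W' \<and> W' \<subseteq> U_e e \<longrightarrow> W' \<subseteq> W)"
proof -
  define F where "F = {W. join_spec W \<and> frame_generating W \<and> W \<subseteq> U_e e}"
  define T where "T = {{p} | p::'a. True}"
  have jsT: "join_spec T" unfolding join_spec_def
  proof (intro conjI ballI allI)
    fix S assume "S \<in> T"
    then obtain p where "S = {p}" unfolding T_def by blast
    then show "has_join S" using join_single by simp
  next
    fix p show "{p} \<in> T" unfolding T_def by blast
  qed
  have DT: "Dcond T" unfolding Dcond_def
  proof (intro ballI allI impI)
    fix S p assume "S \<in> T" "p \<le> join S"
    then obtain r where r1: "S = {r}" unfolding T_def by blast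
    have r: "S = {r}" "p \<le> r" using r1 \<open>p \<le> join S\<close> join_single(2)[of r] by simp_all
    let ?X = "{q. q \<le> p \<and> (\<exists>s\<in>S. q \<le> s)}"
    have "p \<in> ?X" using r by auto
    then show "p \<in> Gamma_U T ?X" using Gamma_sub[of ?X T] by blast
  qed
  have TUe: "T \<subseteq> U_e e" unfolding T_def using singles_in_Ue by blast
  have T: "T \<in> F" unfolding F_def using jsT DT frame_char[OF jsT] TUe by simp
  have js: "join_spec (\<Union>F)" unfolding join_spec_def
  proof (intro conjI ballI allI)
    fix S assume "S \<in> \<Union>F"
    then obtain W where "W \<in> F" "S \<in> W" by blast
    then show "has_join S" unfolding F_def join_spec_def by blast
  next
    fix p have "{p} \<in> T" using jsT unfolding join_spec_def by blast
    then show "{p} \<in> \<Union>F" using T by blast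
  qed
  have "Dcond (\<Union>F)"
  proof (rule Dcond_Union)
    fix W assume "W \<in> F"
    then have "join_spec W" "frame_generating W" unfolding F_def by auto
    then show "Dcond W" using frame_char by blast
  qed
  then have fg: "frame_generating (\<Union>F)" using frame_char[OF js] by blast
  have sub: "\<Union>F \<subseteq> U_e e" unfolding F_def by blast
  have mx: "\<forall>W'. join_spec W' \<and> frame_generating W' \<and> W' \<subseteq> U_e e \<longrightarrow> W' \<subseteq> \<Union>F"
  proof (intro allI impI)
    fix W' assume "join_spec W' \<and> frame_generating W' \<and> W' \<subseteq> U_e e"
    then have "W' \<in> F" unfolding F_def by simp
    then show "W' \<subseteq> \<Union>F" by blast
  qed
  show ?thesis using js fg sub mx by blast
qed

lemma plus_props:
  fixes e :: "'a::order \<Rightarrow> 'b::complete_lattice"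
  assumes jc: "join_completion e" and js: "join_spec W" and fg: "frame_generating W"
    and sub: "W \<subseteq> U_e e"
  shows "join_spec (U_plus W)" "frame_generating (U_plus W)" "U_plus W \<subseteq> U_e e" "W \<subseteq> U_plus W"
proof -
  show "join_spec (U_plus W)" unfolding join_spec_def
  proof (intro conjI ballI allI)
    fix S assume "S \<in> U_plus W" then show "has_join S" unfolding U_plus_def by simp
  next
    fix p
    have "p \<in> Gamma_U W {p}" using Gamma_sub[of "{p}" W] by blast
    then show "{p} \<in> U_plus W" unfolding U_plus_def using join_single(1)[of p] join_single(2)[of p] by simp
  qed
  show WP: "W \<subseteq> U_plus W"
  proof
    fix S assume S: "S \<in> W"
    then have "join S \<in> Gamma_U W S" by (rule Gamma_join)
    moreover have "has_join S" using js S unfolding join_spec_def by blast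
    ultimately show "S \<in> U_plus W" unfolding U_plus_def by simp
  qed
  have iff: "U_ideal W C \<longleftrightarrow> U_ideal (U_plus W) C" for C
  proof
    assume C: "U_ideal W C"
    show "U_ideal (U_plus W) C" unfolding U_ideal_def
    proof (intro conjI allI impI ballI)
      fix x y assume "y \<in> C" "x \<le> y" then show "x \<in> C" using ideal_down[OF C] by blast
    next
      fix S assume "S \<in> U_plus W" "S \<subseteq> C"
      then have "join S \<in> Gamma_U W S" "Gamma_U W S \<subseteq> C"
        using Gamma_least[OF C] unfolding U_plus_def by auto
      then show "join S \<in> C" by blast
    qed
  next
    assume "U_ideal (U_plus W) C" then show "U_ideal W C" using ideal_anti[OF WP] by blast
  qed
  have "U_ideal (U_plus W) = U_ideal W" using iff by (intro ext) simp
  then have "I_U (U_plus W) = I_U W" unfolding I_U_def by simp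
  then show "frame_generating (U_plus W)" using fg unfolding frame_generating_def by simp
  have mono: "e x \<le> e y" if "x \<le> y" for x y
    using jc that unfolding join_completion_def order_embedding_def by blast
  show "U_plus W \<subseteq> U_e e"
  proof
    fix S assume S: "S \<in> U_plus W"
    have "Gamma_U W S \<subseteq> Gamma_e e S" unfolding Gamma_e_def
    proof (rule Inter_greatest)
      fix C assume "C \<in> {C. (\<exists>x. C = e -` {..x}) \<and> S \<subseteq> C}"
      then obtain x where C: "C = e -` {..x}" "S \<subseteq> C" by auto
      have "U_ideal W C" unfolding U_ideal_def
      proof (intro conjI allI impI ballI)
        fix a b assume "b \<in> C" "a \<le> b"
        then have "e b \<le> x" "e a \<le> e b" using C(1) mono[of a b] by auto
        then have "e a \<le> x" by (rule order_trans[rotated])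
        then show "a \<in> C" using C(1) by simp
      next
        fix T assume T: "T \<in> W" "T \<subseteq> C"
        then have "T \<in> U_e e" using sub by blast
        then have j: "join T \<in> Gamma_e e T" unfolding U_e_def by simp
        have "C \<in> {C. (\<exists>x. C = e -` {..x}) \<and> T \<subseteq> C}" using C(1) T(2) by blast
        then show "join T \<in> C" using j unfolding Gamma_e_def by (rule InterD[rotated])
      qed
      then show "Gamma_U W S \<subseteq> C" using Gamma_least C(2) by blast
    qed
    then show "S \<in> U_e e" using S unfolding U_plus_def U_e_def by blast
  qed
qed

theorem lemma5p4:
  fixes e :: "'a::order \<Rightarrow> 'b::complete_lattice"
  assumes "join_completion e"
  shows "maximal_spec (minus_spec (U_e e))"
proof -
  let ?Q = "\<lambda>W. join_spec W \<and> frame_generating W \<and> W \<subseteq> U_e e"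
  let ?P = "\<lambda>W. join_spec W \<and> frame_generating W \<and> W \<subseteq> U_e e \<and>
      (\<forall>W'. join_spec W' \<and> frame_generating W' \<and> W' \<subseteq> U_e e \<longrightarrow> W' \<subseteq> W)"
  obtain W where W: "?P W" using minus_exists by blast
  have W1: "join_spec W" "frame_generating W" "W \<subseteq> U_e e" using W by auto
  have Wmax: "\<And>W'. ?Q W' \<Longrightarrow> W' \<subseteq> W" using W by blast
  have uniq: "W' = W" if W': "?P W'" for W'
  proof (rule subset_antisym)
    have "?Q W'" using W' by blast
    then show "W' \<subseteq> W" by (rule Wmax)
    have m: "\<And>V. ?Q V \<Longrightarrow> V \<subseteq> W'" using W' by blast
    show "W \<subseteq> W'" using m W1 by simp
  qed
  have "minus_spec (U_e e) = W" unfolding minus_spec_def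
    by (rule the_equality[where P = ?P, OF W uniq])
  moreover have "U_plus W \<subseteq> W"
  proof -
    have "?Q (U_plus W)"
      using plus_props[OF assms W1] by simp
    then show ?thesis by (rule Wmax)
  qed
  moreover have "W \<subseteq> U_plus W" using plus_props(4)[OF assms W1] .
  ultimately show ?thesis unfolding maximal_spec_def by simp
qed

end
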